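(* Let $n,m$ be positive integers and $\mathbf a'=(a_1,\dots,a_{n+1})$, $\mathbf b'=(b_1,\dots,b_{n+1})\in\mathbb Z^{n+1}$ with $\sum_ia_i=\sum_ib_i$. Then $\mathcal F_{H(n,m)}(\mathbf a',\mathbf b')$ is integrally equivalent to $\mathcal F_{H(n,m)}(\mathrm{rev}(\mathbf b'),\mathrm{rev}(\mathbf a'))$, where $\mathrm{rev}(v_1,\dots,v_{n+1})=(v_{n+1},\dots,v_1)$.
   Context: $H(n,m)$ is the directed $(n+1)\times(m+1)$ grid graph with vertex set $\{(i,j):1\le i\le n+1,\ 0\le j\le m\}$ and edges $((i,j),(i,j+1))$ for $1\le i\le n+1$, $0\le j\le m-1$, and $((i,j),(i+1,j))$ for $1\le i\le n$, $0\le j\le m$. $\mathcal F_{H(n,m)}(\mathbf a',\mathbf b')$ is the set of nonnegative real edge weightings such that at each vertex, outflow minus inflow equals its netflow, where $(i,0)$ has netflow $a_i$, $(i,m)$ has netflow $-b_i$ ($1\le i\le n+1$), and all other vertices have netflow $0$. Two polytopes are integrally equivalent if there is an affine map restricting to a bijection between them that preserves the lattice (a bijection between the integer points of their affine spans). *)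

theory Defs
  imports Complex_Main
begin

type_synonym vert = "nat \<times> nat"
type_synonym edge = "vert \<times> vert"

definition H_vertices :: "nat \<Rightarrow> nat \<Rightarrow> vert set" where
  "H_vertices n m = {(i, j). 1 \<le> i \<and> i \<le> n + 1 \<and> j \<le> m}"

text \<open>Edge set of H(n,m); an edge is the pair (tail, head).\<close>
definition H_edges :: "nat \<Rightarrow> nat \<Rightarrow> edge set" where
  "H_edges n m =
     {((i, j), (i, j + 1)) | i j. 1 \<le> i \<and> i \<le> n + 1 \<and> j < m}
   \<union> {((i, j), (i + 1, j)) | i j. 1 \<le> i \<and> i \<le> n \<and> j \<le> m}"

definition H_netflow :: "nat \<Rightarrow> (nat \<Rightarrow> int) \<Rightarrow> (nat \<Rightarrow> int) \<Rightarrow> vert \<Rightarrow> real" where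
  "H_netflow m a b v =
     (if snd v = 0 then real_of_int (a (fst v)) else 0)
     + (if snd v = m then - real_of_int (b (fst v)) else 0)"

text \<open>The flow polytope F_{H(n,m)}(a,b): nonnegative edge weightings (as points of
  R^E, i.e. real functions on edges vanishing off the edge set) satisfying flow conservation.\<close>
definition flow_polytope_H ::
  "nat \<Rightarrow> nat \<Rightarrow> (nat \<Rightarrow> int) \<Rightarrow> (nat \<Rightarrow> int) \<Rightarrow> (edge \<Rightarrow> real) set" where
  "flow_polytope_H n m a b =
     {f. (\<forall>e. e \<notin> H_edges n m \<longrightarrow> f e = 0)
       \<and> (\<forall>e \<in> H_edges n m. 0 \<le> f e)
       \<and> (\<forall>v \<in> H_vertices n m.
            (\<Sum>e \<in> {e \<in> H_edges n m. fst e = v}. f e)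
            - (\<Sum>e \<in> {e \<in> H_edges n m. snd e = v}. f e) = H_netflow m a b v)}"

text \<open>Reversal of a vector indexed by 1..n+1.\<close>
definition rev_vec :: "nat \<Rightarrow> (nat \<Rightarrow> int) \<Rightarrow> nat \<Rightarrow> int" where
  "rev_vec n v = (\<lambda>i. v (n + 2 - i))"

definition aff_hull :: "('e \<Rightarrow> real) set \<Rightarrow> ('e \<Rightarrow> real) set" where
  "aff_hull S = {x. \<exists>(k::nat) p c. (\<forall>i<k. p i \<in> S) \<and> (\<Sum>i<k. c i) = 1
                    \<and> x = (\<lambda>e. \<Sum>i<k. c i * p i e)}"

definition int_points :: "('e \<Rightarrow> real) set" where
  "int_points = {x. \<forall>e. x e \<in> \<int>}"

definition affine_map_on :: "'e set \<Rightarrow> (('e \<Rightarrow> real) \<Rightarrow> ('e \<Rightarrow> real)) \<Rightarrow> bool" where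
  "affine_map_on E \<phi> \<longleftrightarrow> (\<exists>c L. \<forall>x. \<phi> x = (\<lambda>e. c e + (\<Sum>e' \<in> E. L e e' * x e')))"

definition integrally_equivalent ::
  "'e set \<Rightarrow> ('e \<Rightarrow> real) set \<Rightarrow> ('e \<Rightarrow> real) set \<Rightarrow> bool" where
  "integrally_equivalent E P Q \<longleftrightarrow>
     (\<exists>\<phi>. affine_map_on E \<phi> \<and> bij_betw \<phi> P Q
          \<and> bij_betw \<phi> (aff_hull P \<inter> int_points) (aff_hull Q \<inter> int_points))"

end

theory Submission
  imports Defs
begin

definition rho :: "nat \<Rightarrow> nat \<Rightarrow> vert \<Rightarrow> vert" where
  "rho n m v = (n + 2 - fst v, m - snd v)"

definition tau :: "nat \<Rightarrow> nat \<Rightarrow> edge \<Rightarrow> edge" where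
  "tau n m e = (rho n m (snd e), rho n m (fst e))"

definition phi :: "nat \<Rightarrow> nat \<Rightarrow> (edge \<Rightarrow> real) \<Rightarrow> (edge \<Rightarrow> real)" where
  "phi n m f = (\<lambda>e. if e \<in> H_edges n m then f (tau n m e) else 0)"

lemma tau_E: "e \<in> H_edges n m \<Longrightarrow> tau n m e \<in> H_edges n m"
  unfolding H_edges_def tau_def rho_def
  apply (auto)
  done

lemma tau_tau: "e \<in> H_edges n m \<Longrightarrow> tau n m (tau n m e) = e"
  unfolding H_edges_def tau_def rho_def by auto

lemma E_fst: "e \<in> H_edges n m \<Longrightarrow> fst e \<in> H_vertices n m"
  unfolding H_edges_def H_vertices_def by auto

lemma E_snd: "e \<in> H_edges n m \<Longrightarrow> snd e \<in> H_vertices n m"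
  unfolding H_edges_def H_vertices_def by auto

lemma rho_V: "v \<in> H_vertices n m \<Longrightarrow> rho n m v \<in> H_vertices n m"
  unfolding H_vertices_def rho_def by auto

lemma rho_rho: "v \<in> H_vertices n m \<Longrightarrow> rho n m (rho n m v) = v"
  unfolding H_vertices_def rho_def by auto

lemma img_out:
  assumes v: "v \<in> H_vertices n m"
  shows "tau n m ` {e \<in> H_edges n m. fst e = v} = {e \<in> H_edges n m. snd e = rho n m v}"
proof (intro equalityI subsetI)
  fix x assume "x \<in> tau n m ` {e \<in> H_edges n m. fst e = v}"
  then obtain e where e: "e \<in> H_edges n m" "fst e = v" "x = tau n m e" by auto
  then show "x \<in> {e \<in> H_edges n m. snd e = rho n m v}"
    using tau_E[OF e(1)] by (auto simp: tau_def)
next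
  fix x assume x: "x \<in> {e \<in> H_edges n m. snd e = rho n m v}"
  have "fst (tau n m x) = v" using x rho_rho[OF v] by (simp add: tau_def)
  moreover have "tau n m x \<in> H_edges n m" "x = tau n m (tau n m x)"
    using x tau_E tau_tau by (metis (mono_tags, lifting) mem_Collect_eq)+
  ultimately have "tau n m x \<in> H_edges n m" "fst (tau n m x) = v" "x = tau n m (tau n m x)" by blast+
  then show "x \<in> tau n m ` {e \<in> H_edges n m. fst e = v}" by blast
qed

lemma img_in:
  assumes v: "v \<in> H_vertices n m"
  shows "tau n m ` {e \<in> H_edges n m. snd e = v} = {e \<in> H_edges n m. fst e = rho n m v}"
proof (intro equalityI subsetI)
  fix x assume "x \<in> tau n m ` {e \<in> H_edges n m. snd e = v}"
  then obtain e where e: "e \<in> H_edges n m" "snd e = v" "x = tau n m e" by auto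
  then show "x \<in> {e \<in> H_edges n m. fst e = rho n m v}"
    using tau_E[OF e(1)] by (auto simp: tau_def)
next
  fix x assume x: "x \<in> {e \<in> H_edges n m. fst e = rho n m v}"
  have "snd (tau n m x) = v" using x rho_rho[OF v] by (simp add: tau_def)
  moreover have "tau n m x \<in> H_edges n m" "x = tau n m (tau n m x)"
    using x tau_E tau_tau by (metis (mono_tags, lifting) mem_Collect_eq)+
  ultimately have "tau n m x \<in> H_edges n m" "snd (tau n m x) = v" "x = tau n m (tau n m x)" by blast+
  then show "x \<in> tau n m ` {e \<in> H_edges n m. snd e = v}" by blast
qed

lemma inj_tau: "inj_on (tau n m) (H_edges n m)"
  by (metis inj_onI tau_tau)

lemma sum_out:
  assumes v: "v \<in> H_vertices n m"
  shows "(\<Sum>e \<in> {e \<in> H_edges n m. fst e = v}. phi n m f e)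
       = (\<Sum>e \<in> {e \<in> H_edges n m. snd e = rho n m v}. f e)"
proof -
  have "(\<Sum>e \<in> {e \<in> H_edges n m. fst e = v}. phi n m f e)
      = (\<Sum>e \<in> {e \<in> H_edges n m. fst e = v}. f (tau n m e))"
    by (rule sum.cong) (auto simp: phi_def)
  also have "\<dots> = (\<Sum>e \<in> tau n m ` {e \<in> H_edges n m. fst e = v}. f e)"
    by (rule sum.reindex[symmetric, unfolded comp_def]) (rule inj_on_subset[OF inj_tau], auto)
  finally show ?thesis using img_out[OF v] by simp
qed

lemma sum_in:
  assumes v: "v \<in> H_vertices n m"
  shows "(\<Sum>e \<in> {e \<in> H_edges n m. snd e = v}. phi n m f e)
       = (\<Sum>e \<in> {e \<in> H_edges n m. fst e = rho n m v}. f e)"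
proof -
  have "(\<Sum>e \<in> {e \<in> H_edges n m. snd e = v}. phi n m f e)
      = (\<Sum>e \<in> {e \<in> H_edges n m. snd e = v}. f (tau n m e))"
    by (rule sum.cong) (auto simp: phi_def)
  also have "\<dots> = (\<Sum>e \<in> tau n m ` {e \<in> H_edges n m. snd e = v}. f e)"
    by (rule sum.reindex[symmetric, unfolded comp_def]) (rule inj_on_subset[OF inj_tau], auto)
  finally show ?thesis using img_in[OF v] by simp
qed

lemma netflow_rho:
  assumes v: "v \<in> H_vertices n m"
    and a': "\<And>i. 1 \<le> i \<Longrightarrow> i \<le> n + 1 \<Longrightarrow> a' i = b (n + 2 - i)"
    and b': "\<And>i. 1 \<le> i \<Longrightarrow> i \<le> n + 1 \<Longrightarrow> b' i = a (n + 2 - i)"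
  shows "- H_netflow m a b (rho n m v) = H_netflow m a' b' v"
proof -
  obtain i j where ij: "v = (i, j)" "1 \<le> i" "i \<le> n + 1" "j \<le> m"
    using v unfolding H_vertices_def by auto
  show ?thesis using ij a'[OF ij(2,3)] b'[OF ij(2,3)]
    unfolding H_netflow_def rho_def by auto
qed

lemma phi_maps:
  assumes f: "f \<in> flow_polytope_H n m a b"
    and a': "\<And>i. 1 \<le> i \<Longrightarrow> i \<le> n + 1 \<Longrightarrow> a' i = b (n + 2 - i)"
    and b': "\<And>i. 1 \<le> i \<Longrightarrow> i \<le> n + 1 \<Longrightarrow> b' i = a (n + 2 - i)"
  shows "phi n m f \<in> flow_polytope_H n m a' b'"
proof -
  have f1: "\<forall>e \<in> H_edges n m. 0 \<le> f e"
    and f2: "\<forall>v \<in> H_vertices n m.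
            (\<Sum>e \<in> {e \<in> H_edges n m. fst e = v}. f e)
            - (\<Sum>e \<in> {e \<in> H_edges n m. snd e = v}. f e) = H_netflow m a b v"
    using f unfolding flow_polytope_H_def by auto
  have "\<forall>v \<in> H_vertices n m.
            (\<Sum>e \<in> {e \<in> H_edges n m. fst e = v}. phi n m f e)
            - (\<Sum>e \<in> {e \<in> H_edges n m. snd e = v}. phi n m f e) = H_netflow m a' b' v"
  proof
    fix v assume v: "v \<in> H_vertices n m"
    have "(\<Sum>e \<in> {e \<in> H_edges n m. fst e = v}. phi n m f e)
            - (\<Sum>e \<in> {e \<in> H_edges n m. snd e = v}. phi n m f e)
        = - ((\<Sum>e \<in> {e \<in> H_edges n m. fst e = rho n m v}. f e)
            - (\<Sum>e \<in> {e \<in> H_edges n m. snd e = rho n m v}. f e))"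
      using sum_out[OF v] sum_in[OF v] by simp
    also have "\<dots> = - H_netflow m a b (rho n m v)" using f2 rho_V[OF v] by simp
    also have "\<dots> = H_netflow m a' b' v" by (rule netflow_rho[where a=a and b=b, OF v a' b'])
    finally show "(\<Sum>e \<in> {e \<in> H_edges n m. fst e = v}. phi n m f e)
            - (\<Sum>e \<in> {e \<in> H_edges n m. snd e = v}. phi n m f e) = H_netflow m a' b' v" .
  qed
  moreover have "\<forall>e \<in> H_edges n m. 0 \<le> phi n m f e"
    using f1 tau_E by (auto simp: phi_def)
  ultimately show ?thesis unfolding flow_polytope_H_def by (auto simp: phi_def)
qed

lemma phi_phi:
  assumes "\<forall>e. e \<notin> H_edges n m \<longrightarrow> f e = 0"
  shows "phi n m (phi n m f) = f"
  using assms tau_E tau_tau by (auto simp: phi_def fun_eq_iff)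

lemma aff_hull_vanish:
  assumes "\<And>p. p \<in> S \<Longrightarrow> \<forall>e. e \<notin> E \<longrightarrow> p e = 0"
    and "x \<in> aff_hull S"
  shows "\<forall>e. e \<notin> E \<longrightarrow> x e = 0"
proof (intro allI impI)
  fix e assume e: "e \<notin> E"
  obtain k :: nat and p c where k: "\<forall>i<k. p i \<in> S" "x = (\<lambda>e. \<Sum>i<k. c i * p i e)"
    using assms(2) unfolding aff_hull_def by blast
  have "\<And>i. i \<in> {..<k} \<Longrightarrow> c i * p i e = 0"
  proof -
    fix i assume "i \<in> {..<k}"
    then have "p i \<in> S" using k(1) by blast
    then have "p i e = 0" using assms(1) e by blast
    then show "c i * p i e = 0" by simp
  qed
  then have "(\<Sum>i<k. c i * p i e) = 0" by (rule sum.neutral[OF ballI])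
  then show "x e = 0" using k(2) by simp
qed

lemma phi_aff:
  assumes "x \<in> aff_hull S" "\<And>p. p \<in> S \<Longrightarrow> phi n m p \<in> T"
  shows "phi n m x \<in> aff_hull T"
proof -
  obtain k :: nat and p c where k: "\<forall>i<k. p i \<in> S" "(\<Sum>i<k. c i) = 1" "x = (\<lambda>e. \<Sum>i<k. c i * p i e)"
    using assms(1) unfolding aff_hull_def by blast
  have "phi n m x = (\<lambda>e. \<Sum>i<k. c i * phi n m (p i) e)"
  proof (rule ext)
    fix e show "phi n m x e = (\<Sum>i<k. c i * phi n m (p i) e)"
      unfolding phi_def k(3) by (cases "e \<in> H_edges n m") simp_all
  qed
  moreover have "\<forall>i<k. phi n m (p i) \<in> T" using k(1) assms(2) by blast
  ultimately show ?thesis unfolding aff_hull_def mem_Collect_eq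
    by (intro exI[of _ k] exI[of _ "\<lambda>i. phi n m (p i)"] exI[of _ c]) (simp add: k(2))
qed

lemma phi_int: assumes "x \<in> int_points" shows "phi n m x \<in> int_points"
proof -
  have "\<And>e. phi n m x e \<in> \<int>"
  proof -
    fix e show "phi n m x e \<in> \<int>"
  proof -
    have xi: "x (tau n m e) \<in> \<int>" using assms unfolding int_points_def mem_Collect_eq by (rule spec)
    show ?thesis unfolding phi_def using xi by simp
  qed
  qed
  then show ?thesis unfolding int_points_def by blast
qed

lemma affine_phi: "affine_map_on (H_edges n m) (phi n m)"
proof -
  have fin: "finite (H_edges n m)"
  proof -
    have "H_edges n m \<subseteq> ({0..n+1} \<times> {0..m}) \<times> ({0..n+1} \<times> {0..m})"
      unfolding H_edges_def by auto
    then show ?thesis by (rule finite_subset) auto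
  qed
  have "\<forall>x. phi n m x = (\<lambda>e. 0 + (\<Sum>e' \<in> H_edges n m.
           (if e \<in> H_edges n m \<and> e' = tau n m e then 1 else 0) * x e'))"
  proof (intro allI ext)
    fix x e
    show "phi n m x e = 0 + (\<Sum>e' \<in> H_edges n m.
           (if e \<in> H_edges n m \<and> e' = tau n m e then 1 else 0) * x e')"
    proof (cases "e \<in> H_edges n m")
      case True
      have "(\<Sum>e' \<in> H_edges n m. (if e \<in> H_edges n m \<and> e' = tau n m e then 1 else 0) * x e')
          = (\<Sum>e' \<in> H_edges n m. if e' = tau n m e then x e' else 0)"
        using True by (intro sum.cong) auto
      also have "\<dots> = x (tau n m e)" using fin tau_E[OF True] by (simp add: sum.delta')
      finally show ?thesis using True by (simp add: phi_def)
    qed (simp add: phi_def)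
  qed
  then show ?thesis unfolding affine_map_on_def
    by (rule exI[of _ "\<lambda>e. 0", OF exI[of _ "\<lambda>e e'. if e \<in> H_edges n m \<and> e' = tau n m e then 1 else 0"]])
qed

lemma invol_bij:
  assumes "\<And>x. x \<in> A \<Longrightarrow> g x \<in> B" "\<And>x. x \<in> B \<Longrightarrow> g x \<in> A"
    "\<And>x. x \<in> A \<Longrightarrow> g (g x) = x" "\<And>x. x \<in> B \<Longrightarrow> g (g x) = x"
  shows "bij_betw g A B"
  by (rule bij_betw_byWitness[where f' = g]) (use assms in auto)

theorem proposition7p4:
  fixes n m :: nat and a b :: "nat \<Rightarrow> int"
  assumes "n \<ge> 1" and "m \<ge> 1"
    and "(\<Sum>i = 1..n+1. a i) = (\<Sum>i = 1..n+1. b i)"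
  shows "integrally_equivalent (H_edges n m)
           (flow_polytope_H n m a b)
           (flow_polytope_H n m (rev_vec n b) (rev_vec n a))"
proof -
  let ?P = "flow_polytope_H n m a b"
  let ?Q = "flow_polytope_H n m (rev_vec n b) (rev_vec n a)"
  have PQ: "phi n m f \<in> ?Q" if "f \<in> ?P" for f
    using that by (rule phi_maps) (simp_all add: rev_vec_def)
  have QP: "phi n m f \<in> ?P" if "f \<in> ?Q" for f
    using that by (rule phi_maps) (simp_all add: rev_vec_def)
  have vP: "\<forall>e. e \<notin> H_edges n m \<longrightarrow> f e = 0" if "f \<in> ?P" for f
    using that unfolding flow_polytope_H_def by blast
  have vQ: "\<forall>e. e \<notin> H_edges n m \<longrightarrow> f e = 0" if "f \<in> ?Q" for f
    using that unfolding flow_polytope_H_def by blast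
  have b1: "bij_betw (phi n m) ?P ?Q"
  proof (rule invol_bij)
    show "phi n m x \<in> ?Q" if "x \<in> ?P" for x using PQ[OF that] .
    show "phi n m x \<in> ?P" if "x \<in> ?Q" for x using QP[OF that] .
    show "phi n m (phi n m x) = x" if "x \<in> ?P" for x using phi_phi[OF vP[OF that]] .
    show "phi n m (phi n m x) = x" if "x \<in> ?Q" for x using phi_phi[OF vQ[OF that]] .
  qed
  have b2: "bij_betw (phi n m) (aff_hull ?P \<inter> int_points) (aff_hull ?Q \<inter> int_points)"
  proof (rule invol_bij)
    fix x assume x: "x \<in> aff_hull ?P \<inter> int_points"
    have "phi n m x \<in> aff_hull ?Q" using x phi_aff[of x ?P n m ?Q] PQ by blast
    moreover have "phi n m x \<in> int_points" using x phi_int by blast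
    ultimately show "phi n m x \<in> aff_hull ?Q \<inter> int_points" by blast
  next
    fix x assume x: "x \<in> aff_hull ?Q \<inter> int_points"
    have "phi n m x \<in> aff_hull ?P" using x phi_aff[of x ?Q n m ?P] QP by blast
    moreover have "phi n m x \<in> int_points" using x phi_int by blast
    ultimately show "phi n m x \<in> aff_hull ?P \<inter> int_points" by blast
  next
    fix x assume x: "x \<in> aff_hull ?P \<inter> int_points"
    have "\<forall>e. e \<notin> H_edges n m \<longrightarrow> x e = 0"
      using x aff_hull_vanish[of ?P "H_edges n m" x] vP by blast
    then show "phi n m (phi n m x) = x" by (rule phi_phi)
  next
    fix x assume x: "x \<in> aff_hull ?Q \<inter> int_points"
    have "\<forall>e. e \<notin> H_edges n m \<longrightarrow> x e = 0"
      using x aff_hull_vanish[of ?Q "H_edges n m" x] vQ by blast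
    then show "phi n m (phi n m x) = x" by (rule phi_phi)
  qed
  show ?thesis unfolding integrally_equivalent_def
    using affine_phi b1 b2 by blast
qed

end
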